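(* For all $A,B\in\mathcal A_n(\Bbbk)$ one has $\varphi(A)\,\varphi(B)=\varphi(AB)$ in $A_n(\Bbbk)$; i.e. $\varphi:\mathcal A_n(\Bbbk)\to A_n(\Bbbk)$ is a monoid homomorphism (from matrix multiplication to multiplication in $A_n(\Bbbk)$).
   Context: Let $\Bbbk$ be a field of characteristic zero and $h$ a formal variable. $A_n(\Bbbk)$ denotes the $n$-th Weyl–Heisenberg algebra over $\Bbbk\llbracket h\rrbracket$ ($h$-adically completed), generated by $\mathbf{x}_i,\mathbf{p}_i$ ($1\le i\le n$) with $[\mathbf{x}_i,\mathbf{x}_j]=[\mathbf{p}_i,\mathbf{p}_j]=0$, $[\mathbf{p}_i,\mathbf{x}_j]=\delta_{ij}$. The normal ordering map $\mathcal N$ is the $\Bbbk\llbracket h\rrbracket$-linear, $h$-adically continuous map from the commutative ring $\Bbbk\llbracket h\rrbracket[x_1,\dots,x_n,p_1,\dots,p_n]$ (completed) to $A_n(\Bbbk)$ sending $\prod_i x_i^{\alpha_i}p_i^{\beta_i}\mapsto(\prod_i\mathbf{x}_i^{\alpha_i})(\prod_j\mathbf{p}_j^{\beta_j})$. Let $\mathcal A_n(\Bbbk):=\{\exp(hX):X\in\mathrm{Mat}_n(\Bbbk\llbracket h\rrbracket)\}$, a monoid under matrix multiplication, and define $\varphi:\mathcal A_n(\Bbbk)\to A_n(\Bbbk)$ by $\varphi(A)=\mathcal N\big(\exp(x^{\top}(A-\mathbf 1)p)\big)$, where $x^{\top}(A-\mathbf1)p=\sum_{k,l}x_k(A-\mathbf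 1)_{kl}p_l$. *)

theory Defs
  imports "HOL-Analysis.Analysis" "HOL-Library.Poly_Mapping"
          "HOL-Computational_Algebra.Formal_Power_Series"
begin

text \<open>Variables: x_i is Inl i, p_i is Inr i, for i in the finite index type 'n (n = CARD('n)).
  The h-adically completed ring k[[h]][x,p]: formal power series in h with polynomial
  coefficients.\<close>

type_synonym 'n xpmono = "('n + 'n) \<Rightarrow>\<^sub>0 nat"
type_synonym ('n, 'k) xppoly = "(('n + 'n) \<Rightarrow>\<^sub>0 nat) \<Rightarrow>\<^sub>0 'k"
type_synonym ('n, 'k) hxp = "((('n + 'n) \<Rightarrow>\<^sub>0 nat) \<Rightarrow>\<^sub>0 'k) fps"

text \<open>The Weyl--Heisenberg algebra A_n(k) is represented in its normally ordered (PBW) basis: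
  the element with coordinates c is sum of c(d,m) h^d x^alpha p^beta, where
  alpha i = m(Inl i), beta i = m(Inr i), and the x's stand to the left of the p's.
  The product is given by the normal-ordering rule
  x^a p^b * x^c p^e = sum_{kappa <= min(b,c)} prod_i kappa_i! C(b_i,kappa_i) C(c_i,kappa_i)
                        x^(a+c-kappa) p^(b+e-kappa),
  which is the consequence of [p_i,x_j] = delta_ij, [x_i,x_j]=[p_i,p_j]=0.\<close>

definition weyl_kappas :: "'n::finite xpmono \<Rightarrow> 'n xpmono \<Rightarrow> ('n \<Rightarrow> nat) set" where
  "weyl_kappas a b = {\<kappa>. \<forall>i. \<kappa> i \<le> min (Poly_Mapping.lookup a (Inr i)) (Poly_Mapping.lookup b (Inl i))}"

definition weyl_res_mono :: "'n::finite xpmono \<Rightarrow> 'n xpmono \<Rightarrow> ('n \<Rightarrow> nat) \<Rightarrow> 'n xpmono" where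
  "weyl_res_mono a b \<kappa> =
     (\<Sum>i\<in>UNIV. Poly_Mapping.single (Inl i) (Poly_Mapping.lookup a (Inl i) + Poly_Mapping.lookup b (Inl i) - \<kappa> i)
             + Poly_Mapping.single (Inr i) (Poly_Mapping.lookup a (Inr i) + Poly_Mapping.lookup b (Inr i) - \<kappa> i))"

definition weyl_coeff :: "'n::finite xpmono \<Rightarrow> 'n xpmono \<Rightarrow> ('n \<Rightarrow> nat) \<Rightarrow> nat" where
  "weyl_coeff a b \<kappa> =
     (\<Prod>i\<in>UNIV. fact (\<kappa> i) * (Poly_Mapping.lookup a (Inr i) choose \<kappa> i) * (Poly_Mapping.lookup b (Inl i) choose \<kappa> i))"

definition weyl_poly_mult :: "('n::finite, 'k::comm_ring_1) xppoly \<Rightarrow> ('n, 'k) xppoly \<Rightarrow> ('n, 'k) xppoly" where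
  "weyl_poly_mult f g =
     (\<Sum>a\<in>Poly_Mapping.keys f. \<Sum>b\<in>Poly_Mapping.keys g. \<Sum>\<kappa>\<in>weyl_kappas a b.
        Poly_Mapping.single (weyl_res_mono a b \<kappa>)
          (Poly_Mapping.lookup f a * Poly_Mapping.lookup g b * of_nat (weyl_coeff a b \<kappa>)))"

definition weyl_mult :: "('n::finite, 'k::comm_ring_1) hxp \<Rightarrow> ('n, 'k) hxp \<Rightarrow> ('n, 'k) hxp" where
  "weyl_mult F G = Abs_fps (\<lambda>d. \<Sum>i\<le>d. weyl_poly_mult (fps_nth F i) (fps_nth G (d - i)))"

text \<open>In the chosen
  representation of A_n(k) by normally ordered coordinates, N sends the commutative monomial
  x^alpha p^beta to the basis element x^alpha p^beta, i.e. it is the identity on coordinates.\<close>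
definition normal_order :: "('n, 'k) hxp \<Rightarrow> ('n, 'k) hxp" where
  "normal_order F = F"

text \<open>Exponential in the commutative completed ring, for y with zero h^0-part (y in h R):
  exp y = sum_m y^m / m!, whose h^d coefficient only involves m \<le> d.\<close>
definition hexp_comm :: "('n, 'k::field_char_0) hxp \<Rightarrow> ('n, 'k) hxp" where
  "hexp_comm y = Abs_fps (\<lambda>d. \<Sum>m\<le>d. Poly_Mapping.single 0 (inverse (fact m)) * (fps_nth (y ^ m) d))"

text \<open>The matrix power X^m is ((**) X ^^ m) (mat 1). The matrix exponential exp(hX) for X in Mat_n(k[[h]]): sum_m h^m X^m / m!.\<close>
definition exp_hmat :: "'k::field_char_0 fps ^ 'n ^ 'n \<Rightarrow> 'k fps ^ 'n ^ 'n" where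
  "exp_hmat X = (\<chi> i j. Abs_fps (\<lambda>d. \<Sum>m\<le>d. fps_nth (((((**) X) ^^ m) (mat 1)) $ i $ j) (d - m) / fact m))"

definition scal_emb :: "'k::comm_ring_1 fps \<Rightarrow> ('n, 'k) hxp" where
  "scal_emb c = Abs_fps (\<lambda>d. Poly_Mapping.single 0 (fps_nth c d))"

definition xp_mono :: "'n \<Rightarrow> 'n \<Rightarrow> ('n, 'k::comm_ring_1) hxp" where
  "xp_mono k l = fps_const (Poly_Mapping.single
      (Poly_Mapping.single (Inl k) 1 + Poly_Mapping.single (Inr l) 1) 1)"

definition quad_form :: "'k::comm_ring_1 fps ^ 'n::finite ^ 'n \<Rightarrow> ('n, 'k) hxp" where
  "quad_form A = (\<Sum>k\<in>UNIV. \<Sum>l\<in>UNIV. xp_mono k l * scal_emb ((A - mat 1) $ k $ l))"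

definition phi :: "'k::field_char_0 fps ^ 'n::finite ^ 'n \<Rightarrow> ('n, 'k) hxp" where
  "phi A = normal_order (hexp_comm (quad_form A))"

end

theory Submission
  imports Defs
begin


lemma pm_expand:
  "(p::'a \<Rightarrow>\<^sub>0 'b::comm_monoid_add) = (\<Sum>a\<in>Poly_Mapping.keys p. Poly_Mapping.single a (Poly_Mapping.lookup p a))"
proof (rule poly_mapping_eqI)
  fix k
  show "Poly_Mapping.lookup p k = Poly_Mapping.lookup (\<Sum>a\<in>Poly_Mapping.keys p. Poly_Mapping.single a (Poly_Mapping.lookup p a)) k"
    by (cases "k \<in> Poly_Mapping.keys p") (auto simp: lookup_sum lookup_single when_def in_keys_iff)
qed

definition sh :: "('a::finite \<Rightarrow> nat) \<Rightarrow> 'a \<Rightarrow>\<^sub>0 nat" where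
  "sh \<mu> = Abs_poly_mapping \<mu>"

lemma lookup_sh [simp]: "Poly_Mapping.lookup (sh \<mu>) = \<mu>"
  unfolding sh_def by (rule lookup_Abs_poly_mapping) simp

lemma sh_add: "sh (\<lambda>v. \<mu> v + \<nu> v) = sh \<mu> + sh \<nu>"
  by (rule poly_mapping_eqI) (simp add: lookup_add)

lemma sh_zero [simp]: "sh (\<lambda>_. 0) = 0"
  by (rule poly_mapping_eqI) simp

definition ffq :: "nat \<Rightarrow> nat \<Rightarrow> 'k::field_char_0" where
  "ffq m j = fact (m + j) / fact m"

lemma ffq_0 [simp]: "ffq m 0 = 1"
  by (simp add: ffq_def)

lemma ffq_comp: "ffq a j * ffq (a + j) i = (ffq a (j + i) :: 'k::field_char_0)"
  by (simp add: ffq_def add.assoc)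

lemma ffq_1: "ffq a 1 = (of_nat (a + 1) :: 'k::field_char_0)"
  by (simp add: ffq_def fact_Suc divide_simps)

definition Dm :: "('n::finite + 'n \<Rightarrow> nat) \<Rightarrow> ('n, 'k::field_char_0) xppoly \<Rightarrow> ('n, 'k) xppoly" where
  "Dm \<mu> f = Abs_poly_mapping (\<lambda>m. (\<Prod>v\<in>UNIV. ffq (Poly_Mapping.lookup m v) (\<mu> v)) * Poly_Mapping.lookup f (m + sh \<mu>))"

lemma lookup_Dm:
  fixes f :: "('n::finite, 'k::field_char_0) xppoly"
  shows "Poly_Mapping.lookup (Dm \<mu> f) m = (\<Prod>v\<in>UNIV. ffq (Poly_Mapping.lookup m v) (\<mu> v)) * Poly_Mapping.lookup f (m + sh \<mu>)"
proof -
  have "{m. (\<Prod>v\<in>UNIV. ffq (Poly_Mapping.lookup m v) (\<mu> v)) * Poly_Mapping.lookup f (m + sh \<mu>) \<noteq> (0::'k)}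
        \<subseteq> (\<lambda>a. a - sh \<mu>) ` Poly_Mapping.keys f"
  proof
    fix m assume "m \<in> {m. (\<Prod>v\<in>UNIV. ffq (Poly_Mapping.lookup m v) (\<mu> v)) * Poly_Mapping.lookup f (m + sh \<mu>) \<noteq> (0::'k)}"
    then have "m + sh \<mu> \<in> Poly_Mapping.keys f" by (auto simp: in_keys_iff)
    moreover have "m = (m + sh \<mu>) - sh \<mu>" by simp
    ultimately show "m \<in> (\<lambda>a. a - sh \<mu>) ` Poly_Mapping.keys f" by blast
  qed
  then have "finite {m. (\<Prod>v\<in>UNIV. ffq (Poly_Mapping.lookup m v) (\<mu> v)) * Poly_Mapping.lookup f (m + sh \<mu>) \<noteq> (0::'k)}"
    by (rule finite_subset) simp
  then show ?thesis unfolding Dm_def by (subst lookup_Abs_poly_mapping) auto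
qed

lemma Dm_add: "Dm \<mu> (f + g) = Dm \<mu> f + Dm \<mu> g"
  by (rule poly_mapping_eqI) (simp add: lookup_Dm lookup_add algebra_simps)

lemma Dm_zero [simp]: "Dm \<mu> 0 = 0"
  by (rule poly_mapping_eqI) (simp add: lookup_Dm)

lemma Dm_sum: "Dm \<mu> (sum F S) = (\<Sum>x\<in>S. Dm \<mu> (F x))"
  by (induction S rule: infinite_finite_induct) (auto simp: Dm_add)

lemma lookup_single0_mult: "Poly_Mapping.lookup (Poly_Mapping.single 0 c * f) m = c * Poly_Mapping.lookup f m"
  by (simp add: lookup_mult lookup_single when_def mult_delta_left)

lemma Dm_scal: "Dm \<mu> (Poly_Mapping.single 0 c * f) = Poly_Mapping.single 0 c * Dm \<mu> f"
  by (rule poly_mapping_eqI) (simp add: lookup_Dm lookup_single0_mult mult.left_commute)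

lemma Dm_Dm: "Dm \<mu> (Dm \<nu> f) = Dm (\<lambda>v. \<mu> v + \<nu> v) f"
proof (rule poly_mapping_eqI)
  fix m
  have "Poly_Mapping.lookup (Dm \<mu> (Dm \<nu> f)) m =
     (\<Prod>v\<in>UNIV. ffq (Poly_Mapping.lookup m v) (\<mu> v) * ffq (Poly_Mapping.lookup m v + \<mu> v) (\<nu> v))
       * Poly_Mapping.lookup f (m + sh \<mu> + sh \<nu>)"
    by (simp add: lookup_Dm lookup_add prod.distrib)
  also have "\<dots> = Poly_Mapping.lookup (Dm (\<lambda>v. \<mu> v + \<nu> v) f) m"
    by (simp add: lookup_Dm ffq_comp sh_add add.assoc)
  finally show "Poly_Mapping.lookup (Dm \<mu> (Dm \<nu> f)) m = Poly_Mapping.lookup (Dm (\<lambda>v. \<mu> v + \<nu> v) f) m" .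
qed

lemma Dm_0 [simp]: "Dm (\<lambda>_. 0) f = f"
  by (rule poly_mapping_eqI) (simp add: lookup_Dm)

lemma Dm_single:
  "Dm \<mu> (Poly_Mapping.single a c) =
    (if (\<forall>v. \<mu> v \<le> Poly_Mapping.lookup a v)
     then Poly_Mapping.single (a - sh \<mu>) ((\<Prod>v\<in>UNIV. ffq (Poly_Mapping.lookup a v - \<mu> v) (\<mu> v)) * c)
     else 0)"
proof (rule poly_mapping_eqI)
  fix m
  show "Poly_Mapping.lookup (Dm \<mu> (Poly_Mapping.single a c)) m = Poly_Mapping.lookup (if (\<forall>v. \<mu> v \<le> Poly_Mapping.lookup a v)
     then Poly_Mapping.single (a - sh \<mu>) ((\<Prod>v\<in>UNIV. ffq (Poly_Mapping.lookup a v - \<mu> v) (\<mu> v)) * c)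
     else 0) m"
  proof (cases "a = m + sh \<mu>")
    case True
    then have le: "\<forall>v. \<mu> v \<le> Poly_Mapping.lookup a v" by (simp add: lookup_add)
    have "a - sh \<mu> = m" using True by simp
    moreover have "\<And>v. Poly_Mapping.lookup a v - \<mu> v = Poly_Mapping.lookup m v" using True by (simp add: lookup_add)
    ultimately show ?thesis using True le by (simp add: lookup_Dm lookup_single)
  next
    case False
    have "a - sh \<mu> \<noteq> m" if "\<forall>v. \<mu> v \<le> Poly_Mapping.lookup a v"
    proof
      assume "a - sh \<mu> = m"
      then have "a = m + sh \<mu>" using that
        by (auto intro!: poly_mapping_eqI simp: lookup_add lookup_minus)
      with False show False by simp
    qed
    then show ?thesis using False by (auto simp: lookup_Dm lookup_single when_def)
  qed
qed

definition ev1 :: "'a \<Rightarrow> 'a \<Rightarrow> nat" where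
  "ev1 v = (\<lambda>w. if w = v then 1 else 0)"

lemma D1_single:
  "Dm (ev1 v) (Poly_Mapping.single a c) =
     Poly_Mapping.single (a - sh (ev1 v)) (of_nat (Poly_Mapping.lookup a v) * c)"
proof (cases "Poly_Mapping.lookup a v = 0")
  case True
  then have nle: "\<not> (\<forall>w. ev1 v w \<le> Poly_Mapping.lookup a w)"
    by (auto simp: ev1_def intro!: exI[of _ v])
  have "Dm (ev1 v) (Poly_Mapping.single a c) = 0"
    by (subst Dm_single) (rule if_not_P[OF nle])
  then show ?thesis using True by simp
next
  case False
  then have le: "\<forall>w. ev1 v w \<le> Poly_Mapping.lookup a w" by (auto simp: ev1_def)
  have "(\<Prod>w\<in>UNIV. ffq (Poly_Mapping.lookup a w - ev1 v w) (ev1 v w)) =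
        (\<Prod>w\<in>UNIV. if w = v then ffq (Poly_Mapping.lookup a v - 1) 1 else (1::'b::field_char_0))"
    by (rule prod.cong) (auto simp: ev1_def)
  also have "\<dots> = of_nat (Poly_Mapping.lookup a v)"
    using False ffq_1[of "Poly_Mapping.lookup a v - 1", where 'k='b] by simp
  finally show ?thesis using le by (simp add: Dm_single)
qed

lemma sh_ev1_split:
  assumes "Poly_Mapping.lookup a v \<noteq> 0"
  shows "a + b - sh (ev1 v) = a - sh (ev1 v) + b"
  using assms by (intro poly_mapping_eqI) (auto simp: lookup_add lookup_minus ev1_def)

lemma sh_ev1_split':
  assumes "Poly_Mapping.lookup b v \<noteq> 0"
  shows "a + b - sh (ev1 v) = a + (b - sh (ev1 v))"
  using assms by (intro poly_mapping_eqI) (auto simp: lookup_add lookup_minus ev1_def)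

lemma D1_mono:
  fixes c d :: "'k::field_char_0"
  shows "Dm (ev1 v) (Poly_Mapping.single a c * Poly_Mapping.single b d :: ('n::finite,'k) xppoly) =
    Dm (ev1 v) (Poly_Mapping.single a c) * Poly_Mapping.single b d +
    Poly_Mapping.single a c * Dm (ev1 v) (Poly_Mapping.single b d)"
proof -
  consider "Poly_Mapping.lookup a v = 0" "Poly_Mapping.lookup b v = 0"
    | "Poly_Mapping.lookup a v \<noteq> 0" "Poly_Mapping.lookup b v = 0"
    | "Poly_Mapping.lookup a v = 0" "Poly_Mapping.lookup b v \<noteq> 0"
    | "Poly_Mapping.lookup a v \<noteq> 0" "Poly_Mapping.lookup b v \<noteq> 0" by blast
  then show ?thesis
  proof cases
    case 1 then show ?thesis by (simp add: mult_single D1_single lookup_add)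
  next
    case 2 then show ?thesis by (simp add: mult_single D1_single lookup_add sh_ev1_split mult.assoc)
  next
    case 3 then show ?thesis by (simp add: mult_single D1_single lookup_add sh_ev1_split' mult.left_commute)
  next
    case 4
    have e1: "a - sh (ev1 v) + b = a + b - sh (ev1 v)" using sh_ev1_split 4(1) by metis
    have e2: "a + (b - sh (ev1 v)) = a + b - sh (ev1 v)" using sh_ev1_split' 4(2) by metis
    show ?thesis
      unfolding mult_single D1_single e1 e2 single_add[symmetric] by (simp add: lookup_add algebra_simps)
  qed
qed

lemma D1_mult:
  fixes f g :: "('n::finite,'k::field_char_0) xppoly"
  shows "Dm (ev1 v) (f * g) = Dm (ev1 v) f * g + f * Dm (ev1 v) g"
proof -
  let ?D = "Dm (ev1 v)"
  let ?sf = "\<lambda>a. Poly_Mapping.single a (Poly_Mapping.lookup f a)"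
  let ?sg = "\<lambda>a. Poly_Mapping.single a (Poly_Mapping.lookup g a)"
  have fg: "f * g = (\<Sum>a\<in>Poly_Mapping.keys f. ?sf a) * (\<Sum>b\<in>Poly_Mapping.keys g. ?sg b)"
    by (simp only: pm_expand[symmetric])
  have Df: "?D f = (\<Sum>a\<in>Poly_Mapping.keys f. ?D (?sf a))"
    by (simp only: Dm_sum[symmetric] pm_expand[symmetric])
  have Dg: "?D g = (\<Sum>a\<in>Poly_Mapping.keys g. ?D (?sg a))"
    by (simp only: Dm_sum[symmetric] pm_expand[symmetric])
  have "?D (f * g) = (\<Sum>a\<in>Poly_Mapping.keys f. \<Sum>b\<in>Poly_Mapping.keys g. ?D (?sf a * ?sg b))"
    unfolding fg by (simp add: sum_product Dm_sum)
  also have "\<dots> = (\<Sum>a\<in>Poly_Mapping.keys f. \<Sum>b\<in>Poly_Mapping.keys g. ?D (?sf a) * ?sg b + ?sf a * ?D (?sg b))"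
    by (simp add: D1_mono)
  also have "\<dots> = (\<Sum>a\<in>Poly_Mapping.keys f. ?D (?sf a)) * (\<Sum>b\<in>Poly_Mapping.keys g. ?sg b)
     + (\<Sum>a\<in>Poly_Mapping.keys f. ?sf a) * (\<Sum>b\<in>Poly_Mapping.keys g. ?D (?sg b))"
    by (simp add: sum.distrib sum_product)
  also have "\<dots> = ?D f * g + f * ?D g"
    by (simp only: Df Dg pm_expand[symmetric])
  finally show ?thesis .
qed




lemma prod_UNIV_sum:
  "(\<Prod>v\<in>(UNIV::('a::finite+'b::finite) set). f v) = (\<Prod>i\<in>UNIV. f (Inl i)) * (\<Prod>j\<in>UNIV. f (Inr j))"
proof -
  have "(\<Prod>v\<in>(UNIV::('a+'b) set). f v) = (\<Prod>v\<in>(UNIV::'a set) <+> (UNIV::'b set). f v)"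
    by (simp add: UNIV_Plus_UNIV)
  also have "\<dots> = (\<Prod>i\<in>UNIV. f (Inl i)) * (\<Prod>j\<in>UNIV. f (Inr j))"
    by (subst prod.Plus) (simp_all add: o_def)
  finally show ?thesis .
qed

definition Dp :: "('n \<Rightarrow> nat) \<Rightarrow> ('n::finite, 'k::field_char_0) xppoly \<Rightarrow> ('n, 'k) xppoly" where
  "Dp \<kappa> = Dm (case_sum (\<lambda>_. 0) \<kappa>)"

definition Dx :: "('n \<Rightarrow> nat) \<Rightarrow> ('n::finite, 'k::field_char_0) xppoly \<Rightarrow> ('n, 'k) xppoly" where
  "Dx \<kappa> = Dm (case_sum \<kappa> (\<lambda>_. 0))"

definition cinv :: "('n::finite \<Rightarrow> nat) \<Rightarrow> ('n, 'k::field_char_0) xppoly" where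
  "cinv \<kappa> = Poly_Mapping.single 0 (inverse (\<Prod>l\<in>UNIV. fact (\<kappa> l)))"

definition KB :: "nat \<Rightarrow> ('n::finite \<Rightarrow> nat) set" where
  "KB B = {\<kappa>. \<forall>l. \<kappa> l \<le> B}"

lemma KB_PiE: "KB B = PiE UNIV (\<lambda>_. {..B})"
  by (auto simp: KB_def PiE_def Pi_def extensional_def)

lemma finite_KB [simp]: "finite (KB B)"
  unfolding KB_PiE by (rule finite_PiE) auto

lemma Dp_single:
  assumes "\<forall>l. \<kappa> l \<le> Poly_Mapping.lookup a (Inr l)"
  shows "Dp \<kappa> (Poly_Mapping.single a c) = Poly_Mapping.single (a - sh (case_sum (\<lambda>_. 0) \<kappa>))
     ((\<Prod>l\<in>UNIV. ffq (Poly_Mapping.lookup a (Inr l) - \<kappa> l) (\<kappa> l)) * c)"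
proof -
  have "\<forall>v. case_sum (\<lambda>_. 0) \<kappa> v \<le> Poly_Mapping.lookup a v"
    using assms by (auto split: sum.split)
  then show ?thesis unfolding Dp_def by (simp add: Dm_single prod_UNIV_sum)
qed

lemma Dp_single0:
  assumes "\<not> (\<forall>l. \<kappa> l \<le> Poly_Mapping.lookup a (Inr l))"
  shows "Dp \<kappa> (Poly_Mapping.single a c) = 0"
proof -
  have "\<not> (\<forall>v. case_sum (\<lambda>_. 0) \<kappa> v \<le> Poly_Mapping.lookup a v)"
    using assms by (auto split: sum.split)
  then show ?thesis unfolding Dp_def by (subst Dm_single) (rule if_not_P)
qed

lemma Dx_single:
  assumes "\<forall>l. \<kappa> l \<le> Poly_Mapping.lookup a (Inl l)"
  shows "Dx \<kappa> (Poly_Mapping.single a c) = Poly_Mapping.single (a - sh (case_sum \<kappa> (\<lambda>_. 0)))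
     ((\<Prod>l\<in>UNIV. ffq (Poly_Mapping.lookup a (Inl l) - \<kappa> l) (\<kappa> l)) * c)"
proof -
  have "\<forall>v. case_sum \<kappa> (\<lambda>_. 0) v \<le> Poly_Mapping.lookup a v"
    using assms by (auto split: sum.split)
  then show ?thesis unfolding Dx_def by (simp add: Dm_single prod_UNIV_sum)
qed

lemma Dx_single0:
  assumes "\<not> (\<forall>l. \<kappa> l \<le> Poly_Mapping.lookup a (Inl l))"
  shows "Dx \<kappa> (Poly_Mapping.single a c) = 0"
proof -
  have "\<not> (\<forall>v. case_sum \<kappa> (\<lambda>_. 0) v \<le> Poly_Mapping.lookup a v)"
    using assms by (auto split: sum.split)
  then show ?thesis unfolding Dx_def by (subst Dm_single) (rule if_not_P)
qed

lemma lookup_wrm_Inl: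
  "Poly_Mapping.lookup (weyl_res_mono a b \<kappa>) (Inl i) =
     Poly_Mapping.lookup a (Inl i) + Poly_Mapping.lookup b (Inl i) - \<kappa> i"
  by (simp add: weyl_res_mono_def lookup_sum lookup_add lookup_single when_def)

lemma lookup_wrm_Inr:
  "Poly_Mapping.lookup (weyl_res_mono a b \<kappa>) (Inr i) =
     Poly_Mapping.lookup a (Inr i) + Poly_Mapping.lookup b (Inr i) - \<kappa> i"
  by (simp add: weyl_res_mono_def lookup_sum lookup_add lookup_single when_def)

lemma coeff_identity:
  assumes "k \<le> a" "k \<le> b"
  shows "inverse (fact k) * ffq (a - k) k * ffq (b - k) k =
         (fact k * of_nat (a choose k) * of_nat (b choose k) :: 'k::field_char_0)"
  using assms by (simp add: ffq_def binomial_fact field_simps)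

lemma mono_term:
  fixes c d :: "'k::field_char_0"
  assumes "\<kappa> \<in> weyl_kappas a b"
  shows "cinv \<kappa> * Dp \<kappa> (Poly_Mapping.single a c) * Dx \<kappa> (Poly_Mapping.single b d)
     = (Poly_Mapping.single (weyl_res_mono a b \<kappa>) (c * d * of_nat (weyl_coeff a b \<kappa>)) :: ('n::finite,'k) xppoly)"
proof -
  have ka: "\<forall>l. \<kappa> l \<le> Poly_Mapping.lookup a (Inr l)" and kb: "\<forall>l. \<kappa> l \<le> Poly_Mapping.lookup b (Inl l)"
    using assms by (auto simp: weyl_kappas_def)
  have idx: "0 + (a - sh (case_sum (\<lambda>_. 0) \<kappa>)) + (b - sh (case_sum \<kappa> (\<lambda>_. 0))) = weyl_res_mono a b \<kappa>"
  proof (rule poly_mapping_eqI)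
    fix v show "Poly_Mapping.lookup (0 + (a - sh (case_sum (\<lambda>_. 0) \<kappa>)) + (b - sh (case_sum \<kappa> (\<lambda>_. 0)))) v =
       Poly_Mapping.lookup (weyl_res_mono a b \<kappa>) v"
      using ka kb by (cases v) (auto simp: lookup_add lookup_minus lookup_wrm_Inl lookup_wrm_Inr)
  qed
  have cf: "inverse (\<Prod>l\<in>UNIV. fact (\<kappa> l)) * (\<Prod>l\<in>UNIV. ffq (Poly_Mapping.lookup a (Inr l) - \<kappa> l) (\<kappa> l))
      * (\<Prod>l\<in>UNIV. ffq (Poly_Mapping.lookup b (Inl l) - \<kappa> l) (\<kappa> l)) = (of_nat (weyl_coeff a b \<kappa>) :: 'k)"
  proof -
    have "inverse (\<Prod>l\<in>UNIV. fact (\<kappa> l)) * (\<Prod>l\<in>UNIV. ffq (Poly_Mapping.lookup a (Inr l) - \<kappa> l) (\<kappa> l))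
      * (\<Prod>l\<in>UNIV. ffq (Poly_Mapping.lookup b (Inl l) - \<kappa> l) (\<kappa> l)) =
      (\<Prod>l\<in>UNIV. inverse (fact (\<kappa> l)) * ffq (Poly_Mapping.lookup a (Inr l) - \<kappa> l) (\<kappa> l)
          * ffq (Poly_Mapping.lookup b (Inl l) - \<kappa> l) (\<kappa> l))"
      by (simp add: prod.distrib prod_inversef[symmetric] o_def)
    also have "\<dots> = (\<Prod>l\<in>UNIV. fact (\<kappa> l) * of_nat (Poly_Mapping.lookup a (Inr l) choose \<kappa> l)
          * of_nat (Poly_Mapping.lookup b (Inl l) choose \<kappa> l))"
      by (rule prod.cong[OF refl]) (use ka kb in \<open>simp add: coeff_identity\<close>)
    also have "\<dots> = of_nat (weyl_coeff a b \<kappa>)"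
      by (simp add: weyl_coeff_def of_nat_prod)
    finally show ?thesis .
  qed
  show ?thesis
    unfolding cinv_def Dp_single[OF ka] Dx_single[OF kb] mult_single idx
    by (simp add: cf[symmetric] algebra_simps)
qed

lemma mono_sum:
  fixes c d :: "'k::field_char_0"
  assumes "\<forall>l. Poly_Mapping.lookup a (Inr l) \<le> B"
  shows "(\<Sum>\<kappa>\<in>KB B. cinv \<kappa> * Dp \<kappa> (Poly_Mapping.single a c) * Dx \<kappa> (Poly_Mapping.single b d))
     = (\<Sum>\<kappa>\<in>weyl_kappas a b. (Poly_Mapping.single (weyl_res_mono a b \<kappa>) (c * d * of_nat (weyl_coeff a b \<kappa>)) :: ('n::finite,'k) xppoly))"
proof (rule sum.mono_neutral_cong_right)
  show "weyl_kappas a b \<subseteq> KB B"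
    using assms by (auto simp: weyl_kappas_def KB_def intro: order_trans)
  show "\<forall>\<kappa>\<in>KB B - weyl_kappas a b. cinv \<kappa> * Dp \<kappa> (Poly_Mapping.single a c) * Dx \<kappa> (Poly_Mapping.single b d) = 0"
  proof
    fix \<kappa> assume "\<kappa> \<in> KB B - weyl_kappas a b"
    then have "\<not> (\<forall>l. \<kappa> l \<le> Poly_Mapping.lookup a (Inr l)) \<or> \<not> (\<forall>l. \<kappa> l \<le> Poly_Mapping.lookup b (Inl l))"
      by (auto simp: weyl_kappas_def)
    then show "cinv \<kappa> * Dp \<kappa> (Poly_Mapping.single a c) * Dx \<kappa> (Poly_Mapping.single b d) = 0"
      using Dp_single0 Dx_single0 by (metis mult_zero_left mult_zero_right)
  qed
qed (auto simp: mono_term)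

lemma Dp_sum: "Dp \<kappa> (sum F S) = (\<Sum>x\<in>S. Dp \<kappa> (F x))"
  unfolding Dp_def by (rule Dm_sum)
lemma Dx_sum: "Dx \<kappa> (sum F S) = (\<Sum>x\<in>S. Dx \<kappa> (F x))"
  unfolding Dx_def by (rule Dm_sum)

lemma triple_prod:
  "(c::'a::comm_semiring_1) * sum A S * sum B T = (\<Sum>a\<in>S. \<Sum>b\<in>T. c * A a * B b)"
proof -
  have "c * sum A S * sum B T = c * (sum A S * sum B T)" by (rule mult.assoc)
  also have "\<dots> = c * (\<Sum>a\<in>S. \<Sum>b\<in>T. A a * B b)" by (simp only: sum_product)
  also have "\<dots> = (\<Sum>a\<in>S. \<Sum>b\<in>T. c * A a * B b)" by (simp add: sum_distrib_left mult.assoc)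
  finally show ?thesis .
qed

lemma wpm_formula:
  fixes f g :: "('n::finite,'k::field_char_0) xppoly"
  assumes "\<forall>a\<in>Poly_Mapping.keys f. \<forall>l. Poly_Mapping.lookup a (Inr l) \<le> B"
  shows "weyl_poly_mult f g = (\<Sum>\<kappa>\<in>KB B. cinv \<kappa> * Dp \<kappa> f * Dx \<kappa> g)"
proof -
  let ?sf = "\<lambda>a. Poly_Mapping.single a (Poly_Mapping.lookup f a)"
  let ?sg = "\<lambda>a. Poly_Mapping.single a (Poly_Mapping.lookup g a)"
  have Df: "Dp \<kappa> f = (\<Sum>a\<in>Poly_Mapping.keys f. Dp \<kappa> (?sf a))" for \<kappa>
    by (simp only: Dp_sum[symmetric] pm_expand[symmetric])
  have Dg: "Dx \<kappa> g = (\<Sum>a\<in>Poly_Mapping.keys g. Dx \<kappa> (?sg a))" for \<kappa>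
    by (simp only: Dx_sum[symmetric] pm_expand[symmetric])
  have "(\<Sum>\<kappa>\<in>KB B. cinv \<kappa> * Dp \<kappa> f * Dx \<kappa> g) =
     (\<Sum>\<kappa>\<in>KB B. \<Sum>a\<in>Poly_Mapping.keys f. \<Sum>b\<in>Poly_Mapping.keys g. cinv \<kappa> * Dp \<kappa> (?sf a) * Dx \<kappa> (?sg b))"
    unfolding Df Dg triple_prod ..
  also have "\<dots> = (\<Sum>a\<in>Poly_Mapping.keys f. \<Sum>b\<in>Poly_Mapping.keys g. \<Sum>\<kappa>\<in>KB B. cinv \<kappa> * Dp \<kappa> (?sf a) * Dx \<kappa> (?sg b))"
    by (subst sum.swap) (simp add: sum.swap[of _ "KB B"])
  also have "\<dots> = weyl_poly_mult f g"
    unfolding weyl_poly_mult_def using assms by (intro sum.cong refl mono_sum) auto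
  finally show ?thesis by simp
qed




notation fps_nth (infixl \<open>$$\<close> 75)

section \<open>Coefficientwise derivatives on hxp\<close>

definition DD :: "('n::finite + 'n \<Rightarrow> nat) \<Rightarrow> ('n, 'k::field_char_0) hxp \<Rightarrow> ('n, 'k) hxp" where
  "DD \<mu> F = Abs_fps (\<lambda>n. Dm \<mu> (F $$ n))"

lemma DD_nth [simp]: "DD \<mu> F $$ n = Dm \<mu> (F $$ n)"
  by (simp add: DD_def)

lemma DD_add: "DD \<mu> (F + G) = DD \<mu> F + DD \<mu> G"
  by (rule fps_ext) (simp add: Dm_add)

lemma DD_zero [simp]: "DD \<mu> 0 = 0"
  by (rule fps_ext) simp

lemma DD_sum: "DD \<mu> (sum F S) = (\<Sum>x\<in>S. DD \<mu> (F x))"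
  by (induction S rule: infinite_finite_induct) (auto simp: DD_add)

lemma DD_DD: "DD \<mu> (DD \<nu> F) = DD (\<lambda>v. \<mu> v + \<nu> v) F"
  by (rule fps_ext) (simp add: Dm_Dm)

lemma DD_0 [simp]: "DD (\<lambda>_. 0) F = F"
  by (rule fps_ext) simp

lemma Dm_diff: "Dm \<mu> (f - g) = Dm \<mu> f - Dm \<mu> g"
  by (rule poly_mapping_eqI) (simp add: lookup_Dm lookup_minus algebra_simps)

lemma DD_diff: "DD \<mu> (F - G) = DD \<mu> F - DD \<mu> G"
  by (rule fps_ext) (simp add: Dm_diff)

lemma DD1_mult: "DD (ev1 v) (F * G) = DD (ev1 v) F * G + F * DD (ev1 v) G"
  by (rule fps_ext) (simp add: fps_mult_nth D1_mult Dm_sum sum.distrib)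

lemma Dm_single0: "(\<exists>w. \<mu> w \<noteq> 0) \<Longrightarrow> Dm \<mu> (Poly_Mapping.single 0 c) = 0"
  by (subst Dm_single) auto

lemma DD1_const0: "DD (ev1 v) (fps_const (Poly_Mapping.single 0 c)) = 0"
  by (rule fps_ext) (auto simp: fps_nth_fps_const Dm_single0 ev1_def)

lemma DD1_scal_emb: "DD (ev1 v) (scal_emb c) = 0"
  by (rule fps_ext) (auto simp: scal_emb_def Dm_single0 ev1_def)

lemma DD1_one [simp]: "DD (ev1 v) 1 = 0"
  using DD1_const0[of v 1] by simp

lemma DD1_power: "DD (ev1 v) (F ^ Suc m) = of_nat (Suc m) * F ^ m * DD (ev1 v) F"
  by (induction m) (simp_all add: DD1_mult algebra_simps)

lemma DD1_killed_prod:
  assumes "\<forall>x\<in>S. DD (ev1 v) (f x) = 0"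
  shows "DD (ev1 v) (\<Prod>x\<in>S. f x) = 0"
  using assms by (induction S rule: infinite_finite_induct) (auto simp: DD1_mult)

lemma DD1_killed_power:
  assumes "DD (ev1 v) F = 0"
  shows "DD (ev1 v) (F ^ m) = 0"
  using assms by (induction m) (auto simp: DD1_mult)

section \<open>Order and truncated equality\<close>

definition og :: "'a::comm_ring_1 fps \<Rightarrow> nat \<Rightarrow> bool" where
  "og F m \<longleftrightarrow> (\<forall>j<m. F $$ j = 0)"

lemma og_mult:
  fixes F G :: "'a::comm_ring_1 fps"
  assumes "og F a" "og G b" shows "og (F * G) (a + b)"
  unfolding og_def
proof (intro allI impI)
  fix j assume j: "j < a + b"
  have "F $$ i * G $$ (j - i) = 0" if "i \<in> {0..j}" for i
  proof (cases "i < a")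
    case True then show ?thesis using assms(1) by (simp add: og_def)
  next
    case False then have "j - i < b" using j that by auto
    then show ?thesis using assms(2) by (simp add: og_def)
  qed
  then show "(F * G) $$ j = 0" by (simp add: fps_mult_nth)
qed

lemma og_mono: "og F m \<Longrightarrow> k \<le> m \<Longrightarrow> og F k"
  by (auto simp: og_def)

lemma og_power:
  fixes F :: "'a::comm_ring_1 fps"
  assumes "F $$ 0 = 0" shows "og (F ^ m) m"
proof (induction m)
  case 0 then show ?case by (simp add: og_def)
next
  case (Suc m)
  have "og F 1" using assms by (simp add: og_def)
  from og_mult[OF this Suc] show ?case by simp
qed

lemma og_add: "og F m \<Longrightarrow> og G m \<Longrightarrow> og (F + G) m"
  by (simp add: og_def)

lemma og_sum: "(\<And>x. x \<in> S \<Longrightarrow> og (f x) m) \<Longrightarrow> og (sum f S) m"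
  by (induction S rule: infinite_finite_induct) (auto simp: og_def)

lemma og_zero [simp]: "og 0 m"
  by (simp add: og_def)

lemma og_multL: "og G b \<Longrightarrow> og ((F::'a::comm_ring_1 fps) * G) b"
  using og_mult[of F 0 G b] by (simp add: og_def)

lemma og_multR: "og F b \<Longrightarrow> og ((F::'a::comm_ring_1 fps) * G) b"
  using og_mult[of F b G 0] by (simp add: og_def)

definition eqN :: "nat \<Rightarrow> 'a::comm_ring_1 fps \<Rightarrow> 'a fps \<Rightarrow> bool" where
  "eqN N F G \<longleftrightarrow> (\<forall>j\<le>N. F $$ j = G $$ j)"

lemma eqN_refl [simp]: "eqN N F F"
  by (simp add: eqN_def)

lemma eqN_sym: "eqN N F G \<Longrightarrow> eqN N G F"
  by (simp add: eqN_def)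

lemma eqN_trans: "eqN N F G \<Longrightarrow> eqN N G H \<Longrightarrow> eqN N F H"
  by (simp add: eqN_def)

lemma eqN_add: "eqN N F F' \<Longrightarrow> eqN N G G' \<Longrightarrow> eqN N (F + G) (F' + G')"
  by (simp add: eqN_def)

lemma eqN_mult:
  fixes F :: "'a::comm_ring_1 fps"
  shows "eqN N F F' \<Longrightarrow> eqN N G G' \<Longrightarrow> eqN N (F * G) (F' * G')"
  unfolding eqN_def fps_mult_nth by (auto intro!: sum.cong)

lemma eqN_prod:
  fixes f :: "'b \<Rightarrow> 'a::comm_ring_1 fps"
  shows "(\<And>x. x \<in> S \<Longrightarrow> eqN N (f x) (g x)) \<Longrightarrow> eqN N (\<Prod>x\<in>S. f x) (\<Prod>x\<in>S. g x)"
  by (induction S rule: infinite_finite_induct) (auto intro: eqN_mult)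

lemmas eqN_trans' [trans] = eqN_trans

lemma eqN_og: "og H (Suc N) \<Longrightarrow> eqN N (F + H) F"
  by (simp add: eqN_def og_def)

lemma eqN_DD: "eqN N F G \<Longrightarrow> eqN N (DD \<mu> F) (DD \<mu> G)"
  by (simp add: eqN_def)

lemma eqN_nth: "eqN N F G \<Longrightarrow> j \<le> N \<Longrightarrow> F $$ j = G $$ j"
  by (simp add: eqN_def)

lemma eqN_all: "(\<And>N. eqN N F G) \<Longrightarrow> F = G"
  by (rule fps_ext) (auto simp: eqN_def)

section \<open>The exponential\<close>

definition Ecf :: "('n, 'k::field_char_0) hxp" where
  "Ecf = Abs_fps (\<lambda>m. Poly_Mapping.single 0 (inverse (fact m)))"

lemma hexp_compose: "hexp_comm y = Ecf oo y"
  by (rule fps_ext) (simp add: hexp_comm_def Ecf_def fps_compose_nth atLeast0AtMost)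

definition Cm :: "nat \<Rightarrow> ('n, 'k::field_char_0) hxp" where
  "Cm m = fps_const (Poly_Mapping.single 0 (inverse (fact m)))"

definition TT :: "nat \<Rightarrow> ('n, 'k::field_char_0) hxp \<Rightarrow> ('n, 'k) hxp" where
  "TT N y = (\<Sum>m\<le>N. Cm m * y ^ m)"

lemma exp_trunc:
  fixes y :: "('n::finite, 'k::field_char_0) hxp"
  assumes "y $$ 0 = 0"
  shows "eqN N (hexp_comm y) (TT N y)"
  unfolding eqN_def
proof (intro allI impI)
  fix j assume j: "j \<le> N"
  have "TT N y $$ j = (\<Sum>m\<le>N. Poly_Mapping.single 0 (inverse (fact m)) * (y ^ m) $$ j)"
    by (simp add: TT_def Cm_def fps_sum_nth)
  also have "\<dots> = (\<Sum>m\<le>j. Poly_Mapping.single 0 (inverse (fact m)) * (y ^ m) $$ j)"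
  proof (rule sum.mono_neutral_right)
    show "\<forall>m\<in>{..N} - {..j}. Poly_Mapping.single 0 (inverse (fact m)) * (y ^ m) $$ j = 0"
      using og_power[OF assms] by (auto simp: og_def)
  qed (use j in auto)
  finally show "hexp_comm y $$ j = TT N y $$ j"
    by (simp add: hexp_comm_def)
qed

lemma of_nat_hxp: "(of_nat c :: ('n, 'k::field_char_0) hxp) = fps_const (Poly_Mapping.single 0 (of_nat c))"
  by (simp add: fps_of_nat)

lemma Cm_binom:
  assumes "j \<le> m"
  shows "(Cm m :: ('n, 'k::field_char_0) hxp) * of_nat (m choose j) = Cm j * Cm (m - j)"
proof -
  have "inverse (fact m) * of_nat (m choose j) = (inverse (fact j) * inverse (fact (m - j)) :: 'k)"
    using assms by (simp add: binomial_fact field_simps)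
  then show ?thesis
    by (simp add: Cm_def of_nat_hxp mult_single del: single_of_nat)
qed

lemma Cm_Suc: "(Cm (Suc i) :: ('n, 'k::field_char_0) hxp) * of_nat (Suc i) = Cm i"
proof -
  have nz: "(of_nat (Suc i) :: 'k) \<noteq> 0" by (rule of_nat_neq_0)
  have h: "inverse (fact (Suc i)) * of_nat (Suc i) = (inverse (fact i) :: 'k)"
    unfolding fact_Suc using nz by (simp add: field_simps del: of_nat_Suc)
  show ?thesis
    unfolding Cm_def of_nat_hxp fps_const_mult mult_single add_0_left h ..
qed

lemma og_Cm_term:
  fixes a b :: "('n, 'k::field_char_0) hxp"
  assumes "a $$ 0 = 0" "b $$ 0 = 0" "N < j + k"
  shows "og (Cm j * Cm k * a ^ j * b ^ k) (Suc N)"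
proof -
  have "og (a ^ j * b ^ k) (j + k)" by (rule og_mult[OF og_power[OF assms(1)] og_power[OF assms(2)]])
  then have "og (Cm j * Cm k * (a ^ j * b ^ k)) (j + k)" by (rule og_multL)
  then show ?thesis using assms(3) by (simp add: mult.assoc og_mono)
qed

lemma exp_add:
  fixes a b :: "('n::finite, 'k::field_char_0) hxp"
  assumes a0: "a $$ 0 = 0" and b0: "b $$ 0 = 0"
  shows "hexp_comm (a + b) = hexp_comm a * hexp_comm b"
proof (rule eqN_all)
  fix N
  define f where "f j k = Cm j * Cm k * a ^ j * b ^ k" for j k
  have "TT N (a + b) = (\<Sum>m\<le>N. \<Sum>j\<le>m. Cm m * (of_nat (m choose j) * a ^ j * b ^ (m - j)))"
    by (simp add: TT_def binomial_ring sum_distrib_left)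
  also have "\<dots> = (\<Sum>m\<le>N. \<Sum>j\<le>m. f j (m - j))"
    by (intro sum.cong refl) (simp add: f_def mult.assoc[symmetric] Cm_binom)
  also have "\<dots> = (\<Sum>(j,k)\<in>{(j,k). j + k \<le> N}. f j k)"
    by (rule sum.triangle_reindex_eq[symmetric])
  finally have T1: "TT N (a + b) = (\<Sum>(j,k)\<in>{(j,k). j + k \<le> N}. f j k)" .
  let ?S1 = "{(j,k). j + k \<le> N}" and ?S2 = "({..N} \<times> {..N}) \<inter> {(j,k). N < j + k}"
  have fin1: "finite ?S1"
    by (rule finite_subset[of _ "{..N} \<times> {..N}"]) auto
  have "TT N a * TT N b = (\<Sum>j\<le>N. \<Sum>k\<le>N. f j k)"
    by (simp add: TT_def f_def sum_product algebra_simps)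
  also have "\<dots> = (\<Sum>(j,k)\<in>{..N} \<times> {..N}. f j k)"
    by (simp add: sum.cartesian_product)
  also have "{..N} \<times> {..N} = ?S1 \<union> ?S2" by auto
  also have "(\<Sum>(j,k)\<in>?S1 \<union> ?S2. f j k) = (\<Sum>(j,k)\<in>?S1. f j k) + (\<Sum>(j,k)\<in>?S2. f j k)"
    by (rule sum.union_disjoint) (use fin1 in auto)
  finally have T2: "TT N a * TT N b = TT N (a + b) + (\<Sum>(j,k)\<in>?S2. f j k)"
    using T1 by simp
  have og2: "og (\<Sum>(j,k)\<in>?S2. f j k) (Suc N)"
    by (rule og_sum) (auto simp: f_def intro!: og_Cm_term a0 b0)
  have "eqN N (hexp_comm (a + b)) (TT N (a + b))"
    by (rule exp_trunc) (simp add: a0 b0)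
  also have "eqN N (TT N (a + b)) (TT N a * TT N b)"
    unfolding T2 by (rule eqN_sym[OF eqN_og[OF og2]])
  also have "eqN N (TT N a * TT N b) (hexp_comm a * hexp_comm b)"
    by (rule eqN_sym, rule eqN_mult; rule exp_trunc) (simp_all add: a0 b0)
  finally show "eqN N (hexp_comm (a + b)) (hexp_comm a * hexp_comm b)" .
qed

lemma exp_zero: "hexp_comm (0 :: ('n::finite, 'k::field_char_0) hxp) = 1"
proof (rule fps_ext)
  fix n
  have "hexp_comm (0 :: ('n, 'k) hxp) $$ n =
     (\<Sum>m\<le>n. Poly_Mapping.single 0 (inverse (fact m)) * ((0::('n,'k) hxp) ^ m) $$ n)"
    by (simp add: hexp_comm_def)
  also have "\<dots> = (\<Sum>m\<le>n. if m = 0 then (1::('n,'k) hxp) $$ n else 0)"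
    by (intro sum.cong refl) (auto simp: power_0_left)
  also have "\<dots> = (1::('n,'k) hxp) $$ n" by simp
  finally show "hexp_comm (0 :: ('n, 'k) hxp) $$ n = (1::('n,'k) hxp) $$ n" .
qed

lemma exp_sum:
  fixes w :: "'a \<Rightarrow> ('n::finite, 'k::field_char_0) hxp"
  assumes "finite S" "\<forall>l\<in>S. w l $$ 0 = 0"
  shows "hexp_comm (\<Sum>l\<in>S. w l) = (\<Prod>l\<in>S. hexp_comm (w l))"
  using assms
proof (induction S rule: finite_induct)
  case empty then show ?case by (simp add: exp_zero)
next
  case (insert x F)
  have "(\<Sum>l\<in>F. w l) $$ 0 = 0" using insert by (simp add: fps_sum_nth)
  then show ?case using insert by (simp add: exp_add)
qed

lemma exp_deriv:
  fixes y :: "('n::finite, 'k::field_char_0) hxp"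
  assumes y0: "y $$ 0 = 0"
  shows "DD (ev1 v) (hexp_comm y) = DD (ev1 v) y * hexp_comm y"
proof (rule eqN_all)
  fix N
  let ?D = "DD (ev1 v)"
  define g where "g m = Cm m * ?D (y ^ m)" for m
  have "?D (TT N y) = (\<Sum>m<Suc N. g m)"
    unfolding TT_def DD_sum g_def lessThan_Suc_atMost
    by (intro sum.cong refl) (simp add: DD1_mult Cm_def DD1_const0)
  also have "\<dots> = g 0 + (\<Sum>i<N. g (Suc i))"
    by (rule sum.lessThan_Suc_shift)
  also have "\<dots> = (\<Sum>i<N. Cm i * y ^ i * ?D y)"
    unfolding g_def DD1_power power_0 DD1_one mult_zero_right add_0_left
    by (intro sum.cong refl) (simp add: mult.assoc[symmetric] Cm_Suc del: of_nat_Suc)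
  also have "\<dots> = ?D y * (\<Sum>i<N. Cm i * y ^ i)"
    by (simp add: sum_distrib_left algebra_simps)
  finally have DT: "?D (TT N y) = ?D y * (\<Sum>i<N. Cm i * y ^ i)" .
  have TS: "TT N y = (\<Sum>i<N. Cm i * y ^ i) + Cm N * y ^ N"
    unfolding TT_def lessThan_Suc_atMost[symmetric] by simp
  have Dy0: "?D y $$ 0 = 0" using y0 by simp
  have og1: "og (?D y * (Cm N * y ^ N)) (Suc N)"
  proof -
    have "og (?D y) 1" using Dy0 by (simp add: og_def)
    from og_mult[OF this og_multL[OF og_power[OF y0]]] show ?thesis by simp
  qed
  have "eqN N (?D (hexp_comm y)) (?D (TT N y))"
    by (rule eqN_DD, rule exp_trunc[OF y0])
  also have "?D (TT N y) = ?D y * (\<Sum>i<N. Cm i * y ^ i)" by (rule DT)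
  also have "eqN N (?D y * (\<Sum>i<N. Cm i * y ^ i)) (?D y * TT N y)"
    unfolding TS distrib_left by (rule eqN_sym, rule eqN_og[OF og1])
  also have "eqN N (?D y * TT N y) (?D y * hexp_comm y)"
    by (rule eqN_mult[OF eqN_refl eqN_sym[OF exp_trunc[OF y0]]])
  finally show "eqN N (?D (hexp_comm y)) (?D y * hexp_comm y)" .
qed

lemma DD_exp:
  fixes y :: "('n::finite, 'k::field_char_0) hxp"
  assumes y0: "y $$ 0 = 0"
    and kill: "\<forall>w w'. \<mu> w \<noteq> 0 \<longrightarrow> \<mu> w' \<noteq> 0 \<longrightarrow> DD (ev1 w) (DD (ev1 w') y) = 0"
  shows "DD \<mu> (hexp_comm y) = (\<Prod>w\<in>UNIV. DD (ev1 w) y ^ \<mu> w) * hexp_comm y"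
proof -
  have "\<And>\<mu>. sum \<mu> UNIV = n \<Longrightarrow> \<forall>w w'. \<mu> w \<noteq> 0 \<longrightarrow> \<mu> w' \<noteq> 0 \<longrightarrow> DD (ev1 w) (DD (ev1 w') y) = 0 \<Longrightarrow>
     DD \<mu> (hexp_comm y) = (\<Prod>w\<in>UNIV. DD (ev1 w) y ^ \<mu> w) * hexp_comm y" for n
  proof (induction n)
    case 0
    then have "\<mu> = (\<lambda>_. 0)" by (auto simp: fun_eq_iff)
    then show ?case by simp
  next
    case (Suc n)
    then obtain v where v: "\<mu> v \<noteq> 0"
      by (metis sum.neutral nat.distinct(1))
    define \<mu>' where "\<mu>' = \<mu>(v := \<mu> v - 1)"
    have s1: "sum \<mu> UNIV = \<mu> v + sum \<mu> (UNIV - {v})"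
      by (rule sum.remove) auto
    have s2: "sum \<mu>' UNIV = \<mu>' v + sum \<mu>' (UNIV - {v})"
      by (rule sum.remove) auto
    have s3: "sum \<mu>' (UNIV - {v}) = sum \<mu> (UNIV - {v})"
      by (rule sum.cong) (auto simp: \<mu>'_def)
    have "sum \<mu>' UNIV = n"
      using Suc.prems(1) s1 s2 s3 v by (simp add: \<mu>'_def)
    moreover have "\<forall>w w'. \<mu>' w \<noteq> 0 \<longrightarrow> \<mu>' w' \<noteq> 0 \<longrightarrow> DD (ev1 w) (DD (ev1 w') y) = 0"
      using Suc.prems(2) by (auto simp: \<mu>'_def split: if_splits)
    ultimately have IH: "DD \<mu>' (hexp_comm y) = (\<Prod>w\<in>UNIV. DD (ev1 w) y ^ \<mu>' w) * hexp_comm y"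
      by (rule Suc.IH)
    have mu: "(\<lambda>w. ev1 v w + \<mu>' w) = \<mu>"
      using v by (auto simp: fun_eq_iff ev1_def \<mu>'_def)
    let ?P' = "\<Prod>w\<in>UNIV. DD (ev1 w) y ^ \<mu>' w"
    have kP: "DD (ev1 v) ?P' = 0"
    proof (rule DD1_killed_prod, intro ballI)
      fix w :: "'n + 'n"
      show "DD (ev1 v) (DD (ev1 w) y ^ \<mu>' w) = 0"
      proof (cases "\<mu>' w = 0")
        case True then show ?thesis by simp
      next
        case False
        then have "\<mu> w \<noteq> 0" by (auto simp: \<mu>'_def split: if_splits)
        then have "DD (ev1 v) (DD (ev1 w) y) = 0" using Suc.prems(2) v by blast
        then show ?thesis by (rule DD1_killed_power)
      qed
    qed
    have p1: "?P' = DD (ev1 v) y ^ (\<mu> v - 1) * (\<Prod>w\<in>UNIV - {v}. DD (ev1 w) y ^ \<mu>' w)"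
      by (subst prod.remove[of UNIV v]) (auto simp: \<mu>'_def)
    have p2: "(\<Prod>w\<in>UNIV. DD (ev1 w) y ^ \<mu> w) = DD (ev1 v) y ^ \<mu> v * (\<Prod>w\<in>UNIV - {v}. DD (ev1 w) y ^ \<mu>' w)"
      by (subst prod.remove[of UNIV v]) (auto simp: \<mu>'_def intro!: prod.cong)
    have p3: "?P' * DD (ev1 v) y = (\<Prod>w\<in>UNIV. DD (ev1 w) y ^ \<mu> w)"
      unfolding p1 p2 using v by (simp add: power_minus_mult[symmetric] algebra_simps)
    have "DD \<mu> (hexp_comm y) = DD (ev1 v) (DD \<mu>' (hexp_comm y))"
      by (simp add: DD_DD mu)
    also have "\<dots> = DD (ev1 v) ?P' * hexp_comm y + ?P' * (DD (ev1 v) y * hexp_comm y)"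
      unfolding IH DD1_mult exp_deriv[OF y0] ..
    also have "\<dots> = (\<Prod>w\<in>UNIV. DD (ev1 w) y ^ \<mu> w) * hexp_comm y"
      unfolding kP p3[symmetric] by (simp add: mult.assoc)
    finally show ?case .
  qed
  then show ?thesis using kill by blast
qed




lemma single0_sum: "Poly_Mapping.single 0 (sum f S) = (\<Sum>x\<in>S. Poly_Mapping.single 0 (f x))"
  by (induction S rule: infinite_finite_induct) (auto simp: single_add)

lemma single0_prod:
  "Poly_Mapping.single 0 (prod f S) = (\<Prod>x\<in>S. Poly_Mapping.single (0::'a::comm_monoid_add) (f x :: 'b::comm_semiring_1))"
proof (induction S rule: infinite_finite_induct)
  case (insert x F)
  have "Poly_Mapping.single 0 (f x * prod f F) = Poly_Mapping.single (0::'a) (f x) * Poly_Mapping.single 0 (prod f F)"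
    by (simp add: mult_single)
  then show ?case using insert by simp
qed auto

lemma fps_const_prod: "fps_const (prod f S) = (\<Prod>x\<in>S. fps_const (f x))"
proof (induction S rule: infinite_finite_induct)
  case (insert x F)
  have "fps_const (f x * prod f F) = fps_const (f x) * fps_const (prod f F)"
    by simp
  then show ?case using insert by simp
qed auto

lemma scal_emb_nth [simp]: "scal_emb c $$ n = Poly_Mapping.single 0 (c $$ n)"
  by (simp add: scal_emb_def)

lemma scal_emb_add: "scal_emb (a + b) = scal_emb a + scal_emb b"
  by (rule fps_ext) (simp add: single_add)

lemma scal_emb_zero [simp]: "scal_emb 0 = 0"
  by (rule fps_ext) simp

lemma scal_emb_sum: "scal_emb (sum f S) = (\<Sum>x\<in>S. scal_emb (f x))"
  by (induction S rule: infinite_finite_induct) (auto simp: scal_emb_add)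

lemma scal_emb_mult: "scal_emb (a * b) = scal_emb a * scal_emb b"
  by (rule fps_ext) (simp add: fps_mult_nth mult_single single0_sum)

definition xmon :: "'n \<Rightarrow> ('n, 'k::comm_ring_1) hxp" where
  "xmon k = fps_const (Poly_Mapping.single (Poly_Mapping.single (Inl k) 1) 1)"

definition pmon :: "'n \<Rightarrow> ('n, 'k::comm_ring_1) hxp" where
  "pmon l = fps_const (Poly_Mapping.single (Poly_Mapping.single (Inr l) 1) 1)"

lemma xp_mono_split: "xp_mono k l = xmon k * pmon l"
  by (simp add: xp_mono_def xmon_def pmon_def mult_single)

lemma DD_const: "DD \<mu> (fps_const f) = fps_const (Dm \<mu> f)"
  by (rule fps_ext) simp

lemma sh_ev1_single: "sh (ev1 v) = Poly_Mapping.single v 1"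
  by (rule poly_mapping_eqI) (simp add: ev1_def lookup_single when_def)

lemma DD_xmon: "DD (ev1 v) (xmon k :: ('n::finite, 'k::field_char_0) hxp) = (if v = Inl k then 1 else 0)"
  by (auto simp: xmon_def DD_const D1_single lookup_single sh_ev1_single)

lemma DD_pmon: "DD (ev1 v) (pmon l :: ('n::finite, 'k::field_char_0) hxp) = (if v = Inr l then 1 else 0)"
  by (auto simp: pmon_def DD_const D1_single lookup_single sh_ev1_single)

definition qf :: "('n::finite \<Rightarrow> 'n \<Rightarrow> 'k::comm_ring_1 fps) \<Rightarrow> ('n, 'k) hxp" where
  "qf m = (\<Sum>k\<in>UNIV. \<Sum>l\<in>UNIV. xp_mono k l * scal_emb (m k l))"

lemma quad_form_qf: "quad_form A = qf (\<lambda>k l. (A - mat 1) $ k $ l)"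
  by (simp add: quad_form_def qf_def)

lemma qf_nth0: "(\<forall>k l. m k l $$ 0 = 0) \<Longrightarrow> qf m $$ 0 = 0"
  by (simp add: qf_def fps_sum_nth)

lemma qf_add: "qf (\<lambda>k l. m k l + m' k l) = qf m + qf m'"
  by (simp add: qf_def scal_emb_add algebra_simps sum.distrib)

lemma DD_qf_p:
  fixes m :: "'n::finite \<Rightarrow> 'n \<Rightarrow> 'k::field_char_0 fps"
  shows "DD (ev1 (Inr l0)) (qf m) = (\<Sum>k\<in>UNIV. xmon k * scal_emb (m k l0))"
proof -
  have t: "DD (ev1 (Inr l0)) (xp_mono k l * scal_emb c) = (if l = l0 then xmon k * scal_emb c else 0)"
    for k l and c :: "'k fps"
    by (simp add: DD1_mult DD1_scal_emb xp_mono_split DD_xmon DD_pmon)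
  show ?thesis by (simp add: qf_def DD_sum t)
qed

lemma DD_qf_x:
  fixes m :: "'n::finite \<Rightarrow> 'n \<Rightarrow> 'k::field_char_0 fps"
  shows "DD (ev1 (Inl k0)) (qf m) = (\<Sum>l\<in>UNIV. pmon l * scal_emb (m k0 l))"
proof -
  have t: "DD (ev1 (Inl k0)) (xp_mono k l * scal_emb c) = (if k = k0 then pmon l * scal_emb c else 0)"
    for k l and c :: "'k fps"
    by (simp add: DD1_mult DD1_scal_emb xp_mono_split DD_xmon DD_pmon)
  have "DD (ev1 (Inl k0)) (qf m) = (\<Sum>k\<in>UNIV. if k = k0 then (\<Sum>l\<in>UNIV. pmon l * scal_emb (m k l)) else 0)"
    unfolding qf_def DD_sum t by (intro sum.cong refl) auto
  then show ?thesis by simp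
qed




lemma kill_x:
  "DD (ev1 (Inr l')) (\<Sum>k\<in>UNIV. xmon k * scal_emb (c k) :: ('n::finite, 'k::field_char_0) hxp) = 0"
  by (simp add: DD_sum DD1_mult DD_xmon DD1_scal_emb)

lemma kill_p:
  "DD (ev1 (Inl k')) (\<Sum>l\<in>UNIV. pmon l * scal_emb (c l) :: ('n::finite, 'k::field_char_0) hxp) = 0"
  by (simp add: DD_sum DD1_mult DD_pmon DD1_scal_emb)

lemma qf_mult:
  fixes m m' :: "'n::finite \<Rightarrow> 'n \<Rightarrow> 'k::field_char_0 fps"
  shows "(\<Sum>l\<in>UNIV. (\<Sum>k\<in>UNIV. xmon k * scal_emb (m k l)) * (\<Sum>j\<in>UNIV. pmon j * scal_emb (m' l j)))
     = qf (\<lambda>k j. \<Sum>l\<in>UNIV. m k l * m' l j)"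
proof -
  have "(\<Sum>l\<in>UNIV. (\<Sum>k\<in>UNIV. xmon k * scal_emb (m k l)) * (\<Sum>j\<in>UNIV. pmon j * scal_emb (m' l j)))
     = (\<Sum>l\<in>UNIV. \<Sum>k\<in>UNIV. \<Sum>j\<in>UNIV. xmon k * pmon j * (scal_emb (m k l) * scal_emb (m' l j)))"
    unfolding sum_product by (intro sum.cong refl) (simp add: algebra_simps)
  also have "\<dots> = (\<Sum>k\<in>UNIV. \<Sum>j\<in>UNIV. \<Sum>l\<in>UNIV. xmon k * pmon j * (scal_emb (m k l) * scal_emb (m' l j)))"
  proof -
    have "(\<Sum>l\<in>UNIV. \<Sum>k\<in>UNIV. \<Sum>j\<in>UNIV. xmon k * pmon j * (scal_emb (m k l) * scal_emb (m' l j)))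
       = (\<Sum>k\<in>UNIV. \<Sum>l\<in>UNIV. \<Sum>j\<in>UNIV. xmon k * pmon j * (scal_emb (m k l) * scal_emb (m' l j)))"
      by (rule sum.swap)
    also have "\<dots> = (\<Sum>k\<in>UNIV. \<Sum>j\<in>UNIV. \<Sum>l\<in>UNIV. xmon k * pmon j * (scal_emb (m k l) * scal_emb (m' l j)))"
      by (rule sum.cong[OF refl], rule sum.swap)
    finally show ?thesis .
  qed
  also have "\<dots> = qf (\<lambda>k j. \<Sum>l\<in>UNIV. m k l * m' l j)"
    by (simp add: qf_def xp_mono_split scal_emb_sum scal_emb_mult sum_distrib_left)
  finally show ?thesis .
qed

lemma matrix_entry:
  fixes A B :: "'a::comm_ring_1 ^ 'n::finite ^ 'n"
  shows "(A ** B - mat 1) $ k $ j = (A - mat 1) $ k $ j + (B - mat 1) $ k $ j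
           + (\<Sum>l\<in>UNIV. (A - mat 1) $ k $ l * (B - mat 1) $ l $ j)"
proof -
  have m: "\<And>a b. (mat 1 :: 'a^'n^'n) $ a $ b = (if a = b then 1 else 0)" by (simp add: mat_def)
  have p: "(A ** B) $ k $ j = (\<Sum>l\<in>UNIV. A $ k $ l * B $ l $ j)" by (simp add: matrix_matrix_mult_def)
  have "(\<Sum>l\<in>UNIV. (A - mat 1) $ k $ l * (B - mat 1) $ l $ j) =
     (\<Sum>l\<in>UNIV. A $ k $ l * B $ l $ j - (if l = j then A $ k $ l else 0) - (if k = l then B $ l $ j else 0)
        + (if k = l then (if l = j then 1 else 0) else 0))"
    by (intro sum.cong refl) (simp add: m algebra_simps)
  also have "\<dots> = (\<Sum>l\<in>UNIV. A $ k $ l * B $ l $ j) - A $ k $ j - B $ k $ j + (if k = j then 1 else 0)"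
    by (simp add: sum.distrib sum_subtractf)
  finally show ?thesis by (simp add: m p algebra_simps)
qed

lemma cinv_prod: "fps_const (cinv \<kappa>) = (\<Prod>l\<in>UNIV. Cm (\<kappa> l) :: ('n::finite, 'k::field_char_0) hxp)"
  by (simp add: cinv_def Cm_def fps_const_prod[symmetric] single0_prod[symmetric] prod_inversef[symmetric] o_def)

lemma prod_TT:
  fixes w :: "'n::finite \<Rightarrow> ('n, 'k::field_char_0) hxp"
  shows "(\<Prod>l\<in>UNIV. TT B (u l * v l)) =
    (\<Sum>\<kappa>\<in>KB B. fps_const (cinv \<kappa>) * (\<Prod>l\<in>UNIV. u l ^ \<kappa> l) * (\<Prod>l\<in>UNIV. v l ^ \<kappa> l))"
proof -
  have "(\<Prod>l\<in>UNIV. TT B (u l * v l)) = (\<Sum>\<kappa>\<in>KB B. \<Prod>l\<in>UNIV. Cm (\<kappa> l) * (u l * v l) ^ \<kappa> l)"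
    unfolding TT_def KB_PiE by (rule prod_sum_PiE) auto
  also have "\<dots> = (\<Sum>\<kappa>\<in>KB B. fps_const (cinv \<kappa>) * (\<Prod>l\<in>UNIV. u l ^ \<kappa> l) * (\<Prod>l\<in>UNIV. v l ^ \<kappa> l))"
    by (intro sum.cong refl) (simp add: cinv_prod prod.distrib power_mult_distrib mult.assoc)
  finally show ?thesis .
qed

lemma bound_exists:
  fixes F :: "('n::finite, 'k::field_char_0) hxp"
  shows "\<exists>B0. \<forall>i\<le>d. \<forall>a\<in>Poly_Mapping.keys (F $$ i). \<forall>l. Poly_Mapping.lookup a (Inr l) \<le> B0"
proof -
  let ?S = "\<Union>i\<le>d. Poly_Mapping.keys (F $$ i)"
  let ?V = "(\<lambda>(a, l). Poly_Mapping.lookup a (Inr l)) ` (?S \<times> (UNIV :: 'n set))"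
  have fin: "finite ?V" by auto
  show ?thesis
  proof (intro exI[of _ "Max (insert 0 ?V)"] allI impI ballI)
    fix i a l assume "i \<le> d" "a \<in> Poly_Mapping.keys (F $$ i)"
    then have "Poly_Mapping.lookup a (Inr l) \<in> insert 0 ?V" by force
    then show "Poly_Mapping.lookup a (Inr l) \<le> Max (insert 0 ?V)" using fin by simp
  qed
qed

lemma main_general:
  fixes A B :: "'k::field_char_0 fps ^ 'n::finite ^ 'n"
  assumes A0: "\<forall>k l. (A - mat 1) $ k $ l $$ 0 = 0" and B0: "\<forall>k l. (B - mat 1) $ k $ l $$ 0 = 0"
  shows "weyl_mult (phi A) (phi B) = phi (A ** B)"
proof -
  define M where "M k l = (A - mat 1) $ k $ l" for k l
  define N where "N k l = (B - mat 1) $ k $ l" for k l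
  define Q1 :: "('n, 'k) hxp" where "Q1 = qf M"
  define Q2 :: "('n, 'k) hxp" where "Q2 = qf N"
  define u :: "'n \<Rightarrow> ('n, 'k) hxp" where "u l = (\<Sum>k\<in>UNIV. xmon k * scal_emb (M k l))" for l
  define v :: "'n \<Rightarrow> ('n, 'k) hxp" where "v l = (\<Sum>j\<in>UNIV. pmon j * scal_emb (N l j))" for l
  define F where "F = hexp_comm Q1"
  define G where "G = hexp_comm Q2"
  have Q10: "Q1 $$ 0 = 0" unfolding Q1_def by (rule qf_nth0) (use A0 in \<open>simp add: M_def\<close>)
  have Q20: "Q2 $$ 0 = 0" unfolding Q2_def by (rule qf_nth0) (use B0 in \<open>simp add: N_def\<close>)
  have u0: "u l $$ 0 = 0" for l using A0 by (simp add: u_def fps_sum_nth M_def)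
  have v0: "v l $$ 0 = 0" for l using B0 by (simp add: v_def fps_sum_nth N_def)
  have Du: "DD (ev1 (Inr l)) Q1 = u l" for l unfolding Q1_def u_def by (rule DD_qf_p)
  have Dv: "DD (ev1 (Inl l)) Q2 = v l" for l unfolding Q2_def v_def by (rule DD_qf_x)
  have DpF: "DD (case_sum (\<lambda>_. 0) \<kappa>) F = (\<Prod>l\<in>UNIV. u l ^ \<kappa> l) * F" for \<kappa>
  proof -
    have "DD (case_sum (\<lambda>_. 0) \<kappa>) F = (\<Prod>w\<in>UNIV. DD (ev1 w) Q1 ^ case_sum (\<lambda>_. 0) \<kappa> w) * F"
      unfolding F_def
    proof (rule DD_exp[OF Q10], intro allI impI)
      fix w w' :: "'n + 'n"
      assume "case_sum (\<lambda>_. 0) \<kappa> w \<noteq> 0" "case_sum (\<lambda>_. 0) \<kappa> w' \<noteq> 0"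
      then obtain l l' where "w = Inr l" "w' = Inr l'" by (cases w; cases w') auto
      then show "DD (ev1 w) (DD (ev1 w') Q1) = 0" by (simp add: Du u_def kill_x)
    qed
    then show ?thesis by (simp add: prod_UNIV_sum Du)
  qed
  have DxG: "DD (case_sum \<kappa> (\<lambda>_. 0)) G = (\<Prod>l\<in>UNIV. v l ^ \<kappa> l) * G" for \<kappa>
  proof -
    have "DD (case_sum \<kappa> (\<lambda>_. 0)) G = (\<Prod>w\<in>UNIV. DD (ev1 w) Q2 ^ case_sum \<kappa> (\<lambda>_. 0) w) * G"
      unfolding G_def
    proof (rule DD_exp[OF Q20], intro allI impI)
      fix w w' :: "'n + 'n"
      assume "case_sum \<kappa> (\<lambda>_. 0) w \<noteq> 0" "case_sum \<kappa> (\<lambda>_. 0) w' \<noteq> 0"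
      then obtain l l' where "w = Inl l" "w' = Inl l'" by (cases w; cases w') auto
      then show "DD (ev1 w) (DD (ev1 w') Q2) = 0" by (simp add: Dv v_def kill_p)
    qed
    then show ?thesis by (simp add: prod_UNIV_sum Dv)
  qed
  define W where "W = (\<Sum>l\<in>UNIV. u l * v l)"
  have W0: "W $$ 0 = 0" by (simp add: W_def fps_sum_nth u0)
  have WQ: "W + (Q1 + Q2) = quad_form (A ** B)"
  proof -
    have "W = qf (\<lambda>k j. \<Sum>l\<in>UNIV. M k l * N l j)"
      unfolding W_def u_def v_def by (rule qf_mult)
    moreover have "quad_form (A ** B) = qf (\<lambda>k j. M k j + N k j + (\<Sum>l\<in>UNIV. M k l * N l j))"
      unfolding quad_form_qf matrix_entry M_def N_def ..
    ultimately show ?thesis by (simp add: qf_add Q1_def Q2_def algebra_simps)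
  qed
  have final: "hexp_comm W * (F * G) = hexp_comm (quad_form (A ** B))"
    unfolding F_def G_def WQ[symmetric] using Q10 Q20 W0 by (simp add: exp_add)
  have phiA: "phi A = F" by (simp add: phi_def normal_order_def F_def Q1_def quad_form_qf M_def[abs_def])
  have phiB: "phi B = G" by (simp add: phi_def normal_order_def G_def Q2_def quad_form_qf N_def[abs_def])
  show ?thesis
  proof (rule fps_ext)
    fix d
    obtain B0 where B0: "\<forall>i\<le>d. \<forall>a\<in>Poly_Mapping.keys (F $$ i). \<forall>l. Poly_Mapping.lookup a (Inr l) \<le> B0"
      using bound_exists by blast
    define BB where "BB = max B0 d"
    have dBB: "d \<le> BB" by (simp add: BB_def)
    have "weyl_mult F G $$ d = (\<Sum>i\<le>d. weyl_poly_mult (F $$ i) (G $$ (d - i)))"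
      by (simp add: weyl_mult_def)
    also have "\<dots> = (\<Sum>i\<le>d. \<Sum>\<kappa>\<in>KB BB. cinv \<kappa> * Dp \<kappa> (F $$ i) * Dx \<kappa> (G $$ (d - i)))"
    proof (rule sum.cong[OF refl], rule wpm_formula)
      fix i assume "i \<in> {..d}"
      then show "\<forall>a\<in>Poly_Mapping.keys (F $$ i). \<forall>l. Poly_Mapping.lookup a (Inr l) \<le> BB"
        using B0 by (auto simp: BB_def le_max_iff_disj)
    qed
    also have "\<dots> = (\<Sum>\<kappa>\<in>KB BB. \<Sum>i\<le>d. cinv \<kappa> * Dp \<kappa> (F $$ i) * Dx \<kappa> (G $$ (d - i)))"
      by (rule sum.swap)
    also have "\<dots> = (\<Sum>\<kappa>\<in>KB BB. (fps_const (cinv \<kappa>) * (DD (case_sum (\<lambda>_. 0) \<kappa>) F * DD (case_sum \<kappa> (\<lambda>_. 0)) G)) $$ d)"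
      unfolding fps_mult_left_const_nth by (rule sum.cong[OF refl]) (simp add: fps_mult_nth atLeast0AtMost sum_distrib_left Dp_def Dx_def mult.assoc)
    also have "\<dots> = (\<Sum>\<kappa>\<in>KB BB. (fps_const (cinv \<kappa>) * (\<Prod>l\<in>UNIV. u l ^ \<kappa> l) * (\<Prod>l\<in>UNIV. v l ^ \<kappa> l) * (F * G)) $$ d)"
      by (rule sum.cong[OF refl]) (simp only: DpF DxG mult_ac)
    also have "\<dots> = ((\<Sum>\<kappa>\<in>KB BB. fps_const (cinv \<kappa>) * (\<Prod>l\<in>UNIV. u l ^ \<kappa> l) * (\<Prod>l\<in>UNIV. v l ^ \<kappa> l)) * (F * G)) $$ d"
      by (simp only: fps_sum_nth sum_distrib_right)
    also have "\<dots> = ((\<Prod>l\<in>UNIV. TT BB (u l * v l)) * (F * G)) $$ d"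
      by (simp only: prod_TT)
    also have "\<dots> = ((\<Prod>l\<in>UNIV. hexp_comm (u l * v l)) * (F * G)) $$ d"
    proof (rule eqN_nth[OF _ dBB], rule eqN_mult[OF _ eqN_refl], rule eqN_prod)
      fix l show "eqN BB (TT BB (u l * v l)) (hexp_comm (u l * v l))"
        by (rule eqN_sym, rule exp_trunc) (simp add: u0)
    qed
    also have "(\<Prod>l\<in>UNIV. hexp_comm (u l * v l)) = hexp_comm W"
      unfolding W_def by (rule exp_sum[symmetric]) (auto simp: u0)
    finally show "weyl_mult (phi A) (phi B) $$ d = phi (A ** B) $$ d"
      using final phiA phiB by (simp add: phi_def normal_order_def)
  qed
qed


lemma exp_hmat_0:
  fixes X :: "'k::field_char_0 fps ^ 'n::finite ^ 'n"
  shows "\<forall>k l. (exp_hmat X - mat 1) $ k $ l $$ 0 = 0"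
  by (simp add: exp_hmat_def)

theorem theorem3p10:
  fixes X Y :: "'k::field_char_0 fps ^ 'n::finite ^ 'n"
  shows "weyl_mult (phi (exp_hmat X)) (phi (exp_hmat Y)) = phi (exp_hmat X ** exp_hmat Y)"
  by (rule main_general[OF exp_hmat_0 exp_hmat_0])


end
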